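(* Let $G=(U,\alpha)$ and $H=(V,\beta)$ be connected graphs. Then $G$ and $H$ are weakly disjoint if and only if their transition matrices share no eigenvalue other than $1$.
   Context: A weight function on a finite set $U$ is a map $\alpha:U\times U\to\mathbb{R}$ with $\alpha\ge 0$, $\alpha(u,u')=\alpha(u',u)$, and $\sum_{u,u'\in U}\alpha(u,u')=1$; its degree function is $p(u)=\sum_{u'\in U}\alpha(u,u')$. A graph is a pair $G=(U,\alpha)$ with $U$ finite and $\alpha$ a weight function on $U$; its edge set is $E(G)=\{(u,u'):\alpha(u,u')>0\}$ (self-loops allowed). $G$ is connected if every two distinct vertices are joined by a path of edges; $G$ is fully supported if $p(u)>0$ for all $u$. For graphs $G=(U,\alpha)$, $H=(V,\beta)$ with degree functions $p,q$, a weight joining of $\alpha$ and $\beta$ is a weight function $\gamma$ on $U\times V$ whose degree function $r(u,v)=\sum_{(u',v')}\gamma((u,v),(u',v'))$ satisfies (a) $\sum_{v}r(u,v)=p(u)$ and $\sum_u r(u,v)=q(v)$ for all $u,v$, and (b) $p(u)\sum_{\tilde v\in V}\gamma((u,v),(u',\tilde v))=\alpha(u,u')r(u,v)$ and $q(v)\sum_{\tilde u\in U}\gamma((u,v),(\tilde u,v'))=\beta(v,v')r(u,v)$ for all $u,u'\in U$, $v,v'\in V$. A graph joining of $G$ and $H$ is a graph $K=(U\times V,\gamma)$ with $\gamma$ a weight joining of $\alpha,\beta$; $\mathcal{J}(G,H)$ denotes the set of these. $G$ and $H$ are weakly disjoint if every $K\in\mathcal{J}(G,H)$ has degree function equal to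 $p\otimes q$, i.e. $r(u,v)=p(u)q(v)$. The transition matrix of a fully supported graph $G=(U,\alpha)$ with $U=\{u_1,\dots,u_m\}$ is the $m\times m$ matrix with entries $\alpha(u_i,u_j)/p(u_i)$. *)

theory Defs
  imports Main "Jordan_Normal_Form.Char_Poly"
begin

(* A graph is represented by a finite vertex set U :: 'a set together with a
   weight function alpha :: 'a => 'a => real; only values on U x U matter. *)

definition weight_function :: "'a set \<Rightarrow> ('a \<Rightarrow> 'a \<Rightarrow> real) \<Rightarrow> bool" where
  "weight_function U \<alpha> \<longleftrightarrow>
     (\<forall>u\<in>U. \<forall>u'\<in>U. \<alpha> u u' \<ge> 0) \<and>
     (\<forall>u\<in>U. \<forall>u'\<in>U. \<alpha> u u' = \<alpha> u' u) \<and>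
     (\<Sum>u\<in>U. \<Sum>u'\<in>U. \<alpha> u u') = 1"

definition degree_fun :: "'a set \<Rightarrow> ('a \<Rightarrow> 'a \<Rightarrow> real) \<Rightarrow> 'a \<Rightarrow> real" where
  "degree_fun U \<alpha> u = (\<Sum>u'\<in>U. \<alpha> u u')"

definition is_graph :: "'a set \<Rightarrow> ('a \<Rightarrow> 'a \<Rightarrow> real) \<Rightarrow> bool" where
  "is_graph U \<alpha> \<longleftrightarrow> finite U \<and> weight_function U \<alpha>"

definition edge_rel :: "'a set \<Rightarrow> ('a \<Rightarrow> 'a \<Rightarrow> real) \<Rightarrow> 'a \<Rightarrow> 'a \<Rightarrow> bool" where
  "edge_rel U \<alpha> u u' \<longleftrightarrow> u \<in> U \<and> u' \<in> U \<and> \<alpha> u u' > 0"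

definition connected_graph :: "'a set \<Rightarrow> ('a \<Rightarrow> 'a \<Rightarrow> real) \<Rightarrow> bool" where
  "connected_graph U \<alpha> \<longleftrightarrow> is_graph U \<alpha> \<and>
     (\<forall>u\<in>U. \<forall>u'\<in>U. u \<noteq> u' \<longrightarrow> (edge_rel U \<alpha>)\<^sup>*\<^sup>* u u')"

definition fully_supported :: "'a set \<Rightarrow> ('a \<Rightarrow> 'a \<Rightarrow> real) \<Rightarrow> bool" where
  "fully_supported U \<alpha> \<longleftrightarrow> (\<forall>u\<in>U. degree_fun U \<alpha> u > 0)"

definition weight_joining ::
  "'a set \<Rightarrow> ('a \<Rightarrow> 'a \<Rightarrow> real) \<Rightarrow> 'b set \<Rightarrow> ('b \<Rightarrow> 'b \<Rightarrow> real)
   \<Rightarrow> ('a \<times> 'b \<Rightarrow> 'a \<times> 'b \<Rightarrow> real) \<Rightarrow> bool" where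
  "weight_joining U \<alpha> V \<beta> \<gamma> \<longleftrightarrow>
     weight_function (U \<times> V) \<gamma> \<and>
     (\<forall>u\<in>U. (\<Sum>v\<in>V. degree_fun (U \<times> V) \<gamma> (u, v)) = degree_fun U \<alpha> u) \<and>
     (\<forall>v\<in>V. (\<Sum>u\<in>U. degree_fun (U \<times> V) \<gamma> (u, v)) = degree_fun V \<beta> v) \<and>
     (\<forall>u\<in>U. \<forall>u'\<in>U. \<forall>v\<in>V. \<forall>v'\<in>V.
        degree_fun U \<alpha> u * (\<Sum>w\<in>V. \<gamma> (u, v) (u', w)) = \<alpha> u u' * degree_fun (U \<times> V) \<gamma> (u, v) \<and>
        degree_fun V \<beta> v * (\<Sum>w\<in>U. \<gamma> (u, v) (w, v')) = \<beta> v v' * degree_fun (U \<times> V) \<gamma> (u, v))"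

definition graph_joinings ::
  "'a set \<Rightarrow> ('a \<Rightarrow> 'a \<Rightarrow> real) \<Rightarrow> 'b set \<Rightarrow> ('b \<Rightarrow> 'b \<Rightarrow> real)
   \<Rightarrow> ('a \<times> 'b \<Rightarrow> 'a \<times> 'b \<Rightarrow> real) set" where
  "graph_joinings U \<alpha> V \<beta> = {\<gamma>. weight_joining U \<alpha> V \<beta> \<gamma>}"

definition weakly_disjoint ::
  "'a set \<Rightarrow> ('a \<Rightarrow> 'a \<Rightarrow> real) \<Rightarrow> 'b set \<Rightarrow> ('b \<Rightarrow> 'b \<Rightarrow> real) \<Rightarrow> bool" where
  "weakly_disjoint U \<alpha> V \<beta> \<longleftrightarrow>
     (\<forall>\<gamma>\<in>graph_joinings U \<alpha> V \<beta>. \<forall>u\<in>U. \<forall>v\<in>V.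
        degree_fun (U \<times> V) \<gamma> (u, v) = degree_fun U \<alpha> u * degree_fun V \<beta> v)"

definition vertex_enum :: "'a set \<Rightarrow> nat \<Rightarrow> 'a" where
  "vertex_enum U = (SOME e. bij_betw e {..<card U} U)"

definition transition_matrix :: "'a set \<Rightarrow> ('a \<Rightarrow> 'a \<Rightarrow> real) \<Rightarrow> real mat" where
  "transition_matrix U \<alpha> =
     mat (card U) (card U)
       (\<lambda>(i, j). \<alpha> (vertex_enum U i) (vertex_enum U j) / degree_fun U \<alpha> (vertex_enum U i))"

end

theory Submission
  imports Defs "Jordan_Normal_Form.Schur_Decomposition"
begin
lemma sum_single_nz:
  assumes "finite A" "a \<in> A" "\<And>x. x \<in> A \<Longrightarrow> x \<noteq> a \<Longrightarrow> g x = (0::'b::comm_monoid_add)"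
  shows "sum g A = g a"
  using assms by (simp add: sum.remove sum.neutral)

lemma cancel_left:
  fixes P Q X :: "'a::semiring_1 mat"
  assumes "Q \<in> carrier_mat n n" "P \<in> carrier_mat n n" "Q * P = 1\<^sub>m n" "X \<in> carrier_mat n k"
  shows "Q * (P * X) = X"
  using assms by (metis assoc_mult_mat left_mult_one_mat)

lemma cancel_right:
  fixes P Q X :: "'a::semiring_1 mat"
  assumes "Q \<in> carrier_mat n n" "P \<in> carrier_mat n n" "Q * P = 1\<^sub>m n" "X \<in> carrier_mat k n"
  shows "X * Q * P = X"
  using assms by (metis assoc_mult_mat right_mult_one_mat)

lemma tri_zero:
  fixes R1 R2 Y :: "complex mat"
  assumes R1: "R1 \<in> carrier_mat n n" and R2: "R2 \<in> carrier_mat m m" and Y: "Y \<in> carrier_mat n m"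
    and u1: "upper_triangular R1" and u2: "upper_triangular R2"
    and eq: "R1 * Y = Y * R2"
    and d: "\<And>i j. i < n \<Longrightarrow> j < m \<Longrightarrow> R1 $$ (i,i) \<noteq> R2 $$ (j,j)"
  shows "Y = 0\<^sub>m n m"
proof -
  have main: "\<forall>i j. i < n \<longrightarrow> j < m \<longrightarrow> (n - i) + j = k \<longrightarrow> Y $$ (i,j) = 0" for k
  proof (induction k rule: less_induct)
    case (less k)
    show ?case
    proof (intro allI impI)
      fix i j assume i: "i < n" and j: "j < m" and k: "(n - i) + j = k"
      have IH1: "Y $$ (k',j) = 0" if "i < k'" "k' < n" for k'
        using less[rule_format, of "(n - k') + j" k' j] that j k by auto
      have IH2: "Y $$ (i,l) = 0" if "l < j" for l
        using less[rule_format, of "(n - i) + l" i l] that j i k by auto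
      have "(R1 * Y) $$ (i,j) = (\<Sum>k'\<in>{0..<n}. R1 $$ (i,k') * Y $$ (k',j))"
        using R1 Y i j by (simp add: scalar_prod_def)
      also have "\<dots> = R1 $$ (i,i) * Y $$ (i,j)"
      proof (rule sum_single_nz)
        fix x assume "x \<in> {0..<n}" "x \<noteq> i"
        then show "R1 $$ (i, x) * Y $$ (x, j) = 0"
          using u1 R1 i IH1[of x] unfolding upper_triangular_def by (cases "x < i") auto
      qed (use i in auto)
      finally have e1: "(R1 * Y) $$ (i,j) = R1 $$ (i,i) * Y $$ (i,j)" .
      have "(Y * R2) $$ (i,j) = (\<Sum>l\<in>{0..<m}. Y $$ (i,l) * R2 $$ (l,j))"
        using R2 Y i j by (simp add: scalar_prod_def)
      also have "\<dots> = Y $$ (i,j) * R2 $$ (j,j)"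
      proof (rule sum_single_nz)
        fix x assume "x \<in> {0..<m}" "x \<noteq> j"
        then show "Y $$ (i, x) * R2 $$ (x, j) = 0"
          using u2 R2 j IH2[of x] unfolding upper_triangular_def by (cases "x < j") auto
      qed (use j in auto)
      finally have e2: "(Y * R2) $$ (i,j) = Y $$ (i,j) * R2 $$ (j,j)" .
      have "R1 $$ (i,i) * Y $$ (i,j) = Y $$ (i,j) * R2 $$ (j,j)" by (metis e1 e2 eq)
      then have "(R1 $$ (i,i) - R2 $$ (j,j)) * Y $$ (i,j) = 0" by (simp add: algebra_simps)
      then show "Y $$ (i,j) = 0" using d[OF i j] by simp
    qed
  qed
  show ?thesis
    by (rule eq_matI) (use main Y in auto)
qed

lemma diag_eigenvalue:
  fixes A :: "complex mat"
  assumes A: "A \<in> carrier_mat n n" and c: "char_poly A = (\<Prod> (e :: complex) \<leftarrow> es. [:- e, 1:])"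
    and e: "e \<in> set es"
  shows "eigenvalue A e"
proof -
  have "poly (char_poly A) e = 0" unfolding c using e
    by (induction es) (auto simp: poly_prod_list)
  then show ?thesis using eigenvalue_root_char_poly[OF A] by simp
qed

lemma sylvester_zero:
  fixes A B X :: "complex mat"
  assumes A: "A \<in> carrier_mat n n" and B: "B \<in> carrier_mat m m" and X: "X \<in> carrier_mat n m"
    and eq: "A * X = X * B"
    and d: "\<And>c. eigenvalue A c \<Longrightarrow> eigenvalue B c \<Longrightarrow> False"
  shows "X = 0\<^sub>m n m"
proof -
  obtain es1 where c1: "char_poly A = (\<Prod> a \<leftarrow> es1. [:- a, 1:])" and l1: "length es1 = n"
    using char_poly_factorized[OF A] by blast
  obtain es2 where c2: "char_poly B = (\<Prod> a \<leftarrow> es2. [:- a, 1:])" and l2: "length es2 = m"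
    using char_poly_factorized[OF B] by blast
  obtain R1 P1 Q1 where s1: "schur_decomposition A es1 = (R1,P1,Q1)" by (cases "schur_decomposition A es1") auto
  obtain R2 P2 Q2 where s2: "schur_decomposition B es2 = (R2,P2,Q2)" by (cases "schur_decomposition B es2") auto
  note S1 = schur_decomposition[OF A c1 s1] and S2 = schur_decomposition[OF B c2 s2]
  from S1 A have w1: "{A,R1,P1,Q1} \<subseteq> carrier_mat n n" "P1 * Q1 = 1\<^sub>m n" "Q1 * P1 = 1\<^sub>m n" "A = P1 * R1 * Q1"
    unfolding similar_mat_wit_def Let_def by auto
  from S2 B have w2: "{B,R2,P2,Q2} \<subseteq> carrier_mat m m" "P2 * Q2 = 1\<^sub>m m" "Q2 * P2 = 1\<^sub>m m" "B = P2 * R2 * Q2"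
    unfolding similar_mat_wit_def Let_def by auto
  have R1: "R1 \<in> carrier_mat n n" and P1: "P1 \<in> carrier_mat n n" and Q1: "Q1 \<in> carrier_mat n n"
    using w1 by auto
  have R2: "R2 \<in> carrier_mat m m" and P2: "P2 \<in> carrier_mat m m" and Q2: "Q2 \<in> carrier_mat m m"
    using w2 by auto
  define Y where "Y = Q1 * X * P2"
  have Yc: "Y \<in> carrier_mat n m" using Q1 X P2 by (simp add: Y_def)
  have R1e: "R1 = Q1 * A * P1"
  proof -
    have "Q1 * A * P1 = Q1 * (P1 * (R1 * Q1)) * P1"
      using w1 R1 P1 Q1 by (simp add: assoc_mult_mat[of _ n n _ n _ n])
    also have "\<dots> = R1 * Q1 * P1" using cancel_left[OF Q1 P1 w1(3), of "R1 * Q1" n] R1 Q1 by simp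
    also have "\<dots> = R1" using cancel_right[OF Q1 P1 w1(3) R1] .
    finally show ?thesis by simp
  qed
  have R2e: "R2 = Q2 * B * P2"
  proof -
    have "Q2 * B * P2 = Q2 * (P2 * (R2 * Q2)) * P2"
      using w2 R2 P2 Q2 by (simp add: assoc_mult_mat[of _ m m _ m _ m])
    also have "\<dots> = R2 * Q2 * P2" using cancel_left[OF Q2 P2 w2(3), of "R2 * Q2" m] R2 Q2 by simp
    also have "\<dots> = R2" using cancel_right[OF Q2 P2 w2(3) R2] .
    finally show ?thesis by simp
  qed
  have "R1 * Y = Q1 * (A * X) * P2"
    unfolding R1e Y_def using A X P1 Q1 P2 w1 cancel_left[OF Q1 P1 w1(3), of "Q1 * (X * P2)" m]
    by (simp add: assoc_mult_mat[of _ n n _ n _ m] assoc_mult_mat[of _ n n _ m _ m])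
  also have "\<dots> = Y * R2"
    unfolding Y_def eq using B X P2 Q2 Q1 R2 w2
    by (simp add: assoc_mult_mat[of _ m m _ m _ m] assoc_mult_mat[of _ n m _ m _ m] assoc_mult_mat[of _ n n _ m _ m])
  finally have eqY: "R1 * Y = Y * R2" .
  have dd: "R1 $$ (i,i) \<noteq> R2 $$ (j,j)" if "i < n" "j < m" for i j
  proof
    assume h: "R1 $$ (i,i) = R2 $$ (j,j)"
    have "diag_mat R1 ! i = R1 $$ (i,i)" "length (diag_mat R1) = n" using R1 that by (auto simp: diag_mat_def)
    then have "R1 $$ (i,i) \<in> set es1" using S1 that by (metis nth_mem)
    then have "eigenvalue A (R1 $$ (i,i))" by (rule diag_eigenvalue[OF A c1])
    moreover have "diag_mat R2 ! j = R2 $$ (j,j)" "length (diag_mat R2) = m" using R2 that by (auto simp: diag_mat_def)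
    then have "R2 $$ (j,j) \<in> set es2" using S2 that by (metis nth_mem)
    then have "eigenvalue B (R2 $$ (j,j))" by (rule diag_eigenvalue[OF B c2])
    ultimately show False using d h by metis
  qed
  have Y0: "Y = 0\<^sub>m n m"
    by (rule tri_zero[OF R1 R2 Yc _ _ eqY dd]) (use S1 S2 in auto)
  have "X = (P1 * Q1) * X * (P2 * Q2)" using w1 w2 X by simp
  also have "\<dots> = P1 * Y * Q2"
    unfolding Y_def using X P1 Q1 P2 Q2
    by (simp add: assoc_mult_mat[of _ n n _ n _ m] assoc_mult_mat[of _ n n _ m _ m] assoc_mult_mat[of _ n m _ m _ m])
  also have "\<dots> = 0\<^sub>m n m" using Y0 P1 Q2 by simp
  finally show ?thesis .
qed

locale cg =
  fixes U :: "'a set" and \<alpha> :: "'a \<Rightarrow> 'a \<Rightarrow> real"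
  assumes cg: "connected_graph U \<alpha>"
begin

abbreviation "p \<equiv> degree_fun U \<alpha>"

lemma fin: "finite U" using cg by (simp add: connected_graph_def is_graph_def)
lemma nonneg: "u \<in> U \<Longrightarrow> u' \<in> U \<Longrightarrow> \<alpha> u u' \<ge> 0"
  using cg by (simp add: connected_graph_def is_graph_def weight_function_def)
lemma sym: "u \<in> U \<Longrightarrow> u' \<in> U \<Longrightarrow> \<alpha> u u' = \<alpha> u' u"
  using cg by (simp add: connected_graph_def is_graph_def weight_function_def)
lemma total: "(\<Sum>u\<in>U. \<Sum>u'\<in>U. \<alpha> u u') = 1"
  using cg by (simp add: connected_graph_def is_graph_def weight_function_def)
lemma sum_p: "(\<Sum>u\<in>U. p u) = 1"
  using total by (simp add: degree_fun_def)
lemma ne: "U \<noteq> {}"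
proof
  assume "U = {}" then show False using total by simp
qed
lemma conn: "u \<in> U \<Longrightarrow> u' \<in> U \<Longrightarrow> u \<noteq> u' \<Longrightarrow> (edge_rel U \<alpha>)\<^sup>*\<^sup>* u u'"
  using cg by (simp add: connected_graph_def)

lemma p_ge: "u \<in> U \<Longrightarrow> u' \<in> U \<Longrightarrow> \<alpha> u u' \<le> p u"
  unfolding degree_fun_def by (rule member_le_sum) (auto intro: nonneg fin)

lemma p_pos: assumes u: "u \<in> U" shows "p u > 0"
proof (cases "\<exists>u'\<in>U. u' \<noteq> u")
  case True
  then obtain u' where u': "u' \<in> U" "u' \<noteq> u" by blast
  have "(edge_rel U \<alpha>)\<^sup>*\<^sup>* u u'" using conn[OF u u'(1)] u' by auto
  then show ?thesis
  proof (cases rule: converse_rtranclpE)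
    case base then show ?thesis using u' by simp
  next
    case (step w)
    then have "\<alpha> u w > 0" "w \<in> U" by (auto simp: edge_rel_def)
    then show ?thesis using p_ge[OF u, of w] by linarith
  qed
next
  case False
  then have U1: "U = {u}" using u by blast
  have "p u = \<alpha> u u" unfolding degree_fun_def U1 by simp
  moreover have "\<alpha> u u = 1" using total unfolding U1 by simp
  ultimately show ?thesis by simp
qed

lemma swap_sum: "(\<Sum>u\<in>U. \<Sum>u'\<in>U. \<alpha> u u' * g u') = (\<Sum>u'\<in>U. p u' * g u')"
proof -
  have "(\<Sum>u\<in>U. \<Sum>u'\<in>U. \<alpha> u u' * g u') = (\<Sum>u'\<in>U. \<Sum>u\<in>U. \<alpha> u u' * g u')"
    by (rule sum.swap)
  also have "\<dots> = (\<Sum>u'\<in>U. (\<Sum>u\<in>U. \<alpha> u' u) * g u')"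
    by (rule sum.cong) (auto simp: sum_distrib_right sym intro!: sum.cong)
  finally show ?thesis by (simp add: degree_fun_def)
qed

lemma swap_sum_c: "(\<Sum>u\<in>U. \<Sum>u'\<in>U. complex_of_real (\<alpha> u u') * g u') = (\<Sum>u'\<in>U. complex_of_real (p u') * g u')"
proof -
  have "(\<Sum>u\<in>U. \<Sum>u'\<in>U. complex_of_real (\<alpha> u u') * g u') = (\<Sum>u'\<in>U. \<Sum>u\<in>U. complex_of_real (\<alpha> u u') * g u')"
    by (rule sum.swap)
  also have "\<dots> = (\<Sum>u'\<in>U. complex_of_real (\<Sum>u\<in>U. \<alpha> u' u) * g u')"
    by (rule sum.cong) (auto simp: sum_distrib_right sym intro!: sum.cong)
  finally show ?thesis by (simp add: degree_fun_def)
qed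

lemma energy:
  fixes x :: "'a \<Rightarrow> real" and t :: real
  shows "(\<Sum>u\<in>U. \<Sum>u'\<in>U. \<alpha> u u' * (x u + t * x u')\<^sup>2)
    = (1 + t\<^sup>2) * (\<Sum>u\<in>U. p u * (x u)\<^sup>2) + 2 * t * (\<Sum>u\<in>U. x u * (\<Sum>u'\<in>U. \<alpha> u u' * x u'))"
proof -
  have "(\<Sum>u\<in>U. \<Sum>u'\<in>U. \<alpha> u u' * (x u + t * x u')\<^sup>2)
     = (\<Sum>u\<in>U. \<Sum>u'\<in>U. \<alpha> u u' * (x u)\<^sup>2) + t\<^sup>2 * (\<Sum>u\<in>U. \<Sum>u'\<in>U. \<alpha> u u' * (x u')\<^sup>2)
       + 2 * t * (\<Sum>u\<in>U. x u * (\<Sum>u'\<in>U. \<alpha> u u' * x u'))"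
  proof -
    have pt: "\<alpha> u u' * (x u + t * x u')\<^sup>2 = \<alpha> u u' * (x u)\<^sup>2 + t\<^sup>2 * (\<alpha> u u' * (x u')\<^sup>2) + 2 * t * (x u * (\<alpha> u u' * x u'))" for u u'
      by (simp add: power2_eq_square algebra_simps)
    have inner: "(\<Sum>u'\<in>U. \<alpha> u u' * (x u + t * x u')\<^sup>2) = (\<Sum>u'\<in>U. \<alpha> u u' * (x u)\<^sup>2) + t\<^sup>2 * (\<Sum>u'\<in>U. \<alpha> u u' * (x u')\<^sup>2) + 2 * t * (x u * (\<Sum>u'\<in>U. \<alpha> u u' * x u'))" for u
      unfolding pt sum.distrib sum_distrib_left by simp
    show ?thesis unfolding inner sum.distrib sum_distrib_left by simp
  qed
  also have "(\<Sum>u\<in>U. \<Sum>u'\<in>U. \<alpha> u u' * (x u)\<^sup>2) = (\<Sum>u\<in>U. p u * (x u)\<^sup>2)"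
    by (simp add: degree_fun_def sum_distrib_right)
  also have "(\<Sum>u\<in>U. \<Sum>u'\<in>U. \<alpha> u u' * (x u')\<^sup>2) = (\<Sum>u\<in>U. p u * (x u)\<^sup>2)"
    by (rule swap_sum)
  finally show ?thesis by (simp add: algebra_simps)
qed

lemma energy_zero:
  fixes x :: "'a \<Rightarrow> real" and t :: real
  assumes "(\<Sum>u\<in>U. \<Sum>u'\<in>U. \<alpha> u u' * (x u + t * x u')\<^sup>2) = 0" "u \<in> U" "u' \<in> U" "\<alpha> u u' > 0"
  shows "x u + t * x u' = 0"
proof -
  define F where "F = (\<lambda>u. \<Sum>u'\<in>U. \<alpha> u u' * (x u + t * x u')\<^sup>2)"
  have nn: "\<And>v. v \<in> U \<Longrightarrow> 0 \<le> F v"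
    unfolding F_def by (auto intro!: sum_nonneg simp: nonneg)
  have "sum F U = 0" using assms(1) by (simp add: F_def)
  then have "\<forall>v\<in>U. F v = 0" using sum_nonneg_eq_0_iff[of U F] fin nn by blast
  then have "F u = 0" using assms(2) by blast
  then have z: "(\<Sum>u'\<in>U. \<alpha> u u' * (x u + t * x u')\<^sup>2) = 0" by (simp add: F_def)
  have nn2: "\<And>v. v \<in> U \<Longrightarrow> 0 \<le> \<alpha> u v * (x u + t * x v)\<^sup>2"
    using nonneg[OF assms(2)] by simp
  have "\<alpha> u u' * (x u + t * x u')\<^sup>2 = 0"
    using z sum_nonneg_eq_0_iff[of U "\<lambda>v. \<alpha> u v * (x u + t * x v)\<^sup>2"] fin nn2 assms(3) by blast
  then show ?thesis using assms(4) by simp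
qed

lemma eig1_const:
  fixes x :: "'a \<Rightarrow> real"
  assumes ev: "\<forall>u\<in>U. (\<Sum>u'\<in>U. \<alpha> u u' * x u') = p u * x u" and u: "u \<in> U" and u': "u' \<in> U"
  shows "x u = x u'"
proof -
  have S: "(\<Sum>u\<in>U. x u * (\<Sum>u'\<in>U. \<alpha> u u' * x u')) = (\<Sum>u\<in>U. p u * (x u)\<^sup>2)"
    using ev by (auto intro!: sum.cong simp: power2_eq_square algebra_simps sum_negf)
  have E: "(\<Sum>u\<in>U. \<Sum>u'\<in>U. \<alpha> u u' * (x u + (-1) * x u')\<^sup>2) = 0"
    unfolding energy S by simp
  have step: "edge_rel U \<alpha> a b \<Longrightarrow> x a = x b" for a b
    using energy_zero[OF E, of a b] by (auto simp: edge_rel_def)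
  show ?thesis
  proof (cases "u = u'")
    case False
    have "(edge_rel U \<alpha>)\<^sup>*\<^sup>* u u'" using conn[OF u u' False] .
    then show ?thesis by induction (auto dest: step)
  qed simp
qed

lemma eigm1_flip:
  fixes x :: "'a \<Rightarrow> real"
  assumes ev: "\<forall>u\<in>U. (\<Sum>u'\<in>U. \<alpha> u u' * x u') = - p u * x u" and "u \<in> U" "u' \<in> U" "\<alpha> u u' > 0"
  shows "x u' = - x u"
proof -
  have S: "(\<Sum>u\<in>U. x u * (\<Sum>u'\<in>U. \<alpha> u u' * x u')) = - (\<Sum>u\<in>U. p u * (x u)\<^sup>2)"
    using ev by (auto intro!: sum.cong simp: power2_eq_square algebra_simps sum_negf)
  have E: "(\<Sum>u\<in>U. \<Sum>u'\<in>U. \<alpha> u u' * (x u + 1 * x u')\<^sup>2) = 0"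
    unfolding energy S by simp
  show ?thesis using energy_zero[OF E assms(2-4)] by simp
qed

lemma sum_px_zero:
  fixes x :: "'a \<Rightarrow> real"
  assumes ev: "\<forall>u\<in>U. (\<Sum>u'\<in>U. \<alpha> u u' * x u') = lam * p u * x u" and l: "lam \<noteq> 1"
  shows "(\<Sum>u\<in>U. p u * x u) = 0"
proof -
  have "(\<Sum>u\<in>U. \<Sum>u'\<in>U. \<alpha> u u' * x u') = lam * (\<Sum>u\<in>U. p u * x u)"
    using ev by (simp add: sum_distrib_left mult.assoc)
  then have "(1 - lam) * (\<Sum>u\<in>U. p u * x u) = 0" using swap_sum[of x] by (simp add: algebra_simps)
  then show ?thesis using l by simp
qed


lemma ev_Re:
  assumes ev: "\<forall>u\<in>U. (\<Sum>u'\<in>U. complex_of_real (\<alpha> u u') * z u') = complex_of_real lam * complex_of_real (p u) * z u"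
  shows "\<forall>u\<in>U. (\<Sum>u'\<in>U. \<alpha> u u' * Re (z u')) = lam * p u * Re (z u)"
    and "\<forall>u\<in>U. (\<Sum>u'\<in>U. \<alpha> u u' * Im (z u')) = lam * p u * Im (z u)"
proof -
  show "\<forall>u\<in>U. (\<Sum>u'\<in>U. \<alpha> u u' * Re (z u')) = lam * p u * Re (z u)"
  proof
    fix u assume u: "u \<in> U"
    have "Re (\<Sum>u'\<in>U. complex_of_real (\<alpha> u u') * z u') = Re (complex_of_real lam * complex_of_real (p u) * z u)"
      using ev u by simp
    then show "(\<Sum>u'\<in>U. \<alpha> u u' * Re (z u')) = lam * p u * Re (z u)" by (simp add: Re_sum)
  qed
  show "\<forall>u\<in>U. (\<Sum>u'\<in>U. \<alpha> u u' * Im (z u')) = lam * p u * Im (z u)"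
  proof
    fix u assume u: "u \<in> U"
    have "Im (\<Sum>u'\<in>U. complex_of_real (\<alpha> u u') * z u') = Im (complex_of_real lam * complex_of_real (p u) * z u)"
      using ev u by simp
    then show "(\<Sum>u'\<in>U. \<alpha> u u' * Im (z u')) = lam * p u * Im (z u)" by (simp add: Im_sum)
  qed
qed

lemma const_complex:
  assumes ev: "\<forall>u\<in>U. (\<Sum>u'\<in>U. complex_of_real (\<alpha> u u') * z u') = 1 * complex_of_real (p u) * z u"
    and u: "u \<in> U" and u': "u' \<in> U"
  shows "z u = z u'"
proof -
  have ev': "\<forall>u\<in>U. (\<Sum>u'\<in>U. complex_of_real (\<alpha> u u') * z u') = complex_of_real 1 * complex_of_real (p u) * z u"
    using ev by simp
  note R = ev_Re[OF ev']
  have "Re (z u) = Re (z u')" using eig1_const[of "\<lambda>v. Re (z v)", OF _ u u'] R(1) by simp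
  moreover have "Im (z u) = Im (z u')" using eig1_const[of "\<lambda>v. Im (z v)", OF _ u u'] R(2) by simp
  ultimately show ?thesis by (simp add: complex_eq_iff)
qed

lemma eig_bound:
  assumes ev: "\<forall>u\<in>U. (\<Sum>u'\<in>U. complex_of_real (\<alpha> u u') * z u') = c * complex_of_real (p u) * z u"
    and u0: "u0 \<in> U" "z u0 \<noteq> 0"
  shows "norm c \<le> 1"
proof -
  define M where "M = Max ((\<lambda>u. norm (z u)) ` U)"
  have "M \<in> (\<lambda>u. norm (z u)) ` U" unfolding M_def using fin u0 by (intro Max_in) auto
  then obtain um where um: "um \<in> U" "M = norm (z um)" by auto
  have le: "norm (z u) \<le> M" if "u \<in> U" for u unfolding M_def using fin that by (intro Max_ge) auto
  have Mpos: "M > 0" using le[OF u0(1)] u0(2) by (meson norm_le_zero_iff not_le order_trans)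
  have "norm c * p um * M = norm (c * complex_of_real (p um) * z um)"
    using p_pos[OF um(1)] um by (simp add: norm_mult)
  also have "\<dots> = norm (\<Sum>u'\<in>U. complex_of_real (\<alpha> um u') * z u')" using ev um by simp
  also have "\<dots> \<le> (\<Sum>u'\<in>U. norm (complex_of_real (\<alpha> um u') * z u'))" by (rule norm_sum)
  also have "\<dots> = (\<Sum>u'\<in>U. \<alpha> um u' * norm (z u'))"
    by (rule sum.cong) (auto simp: norm_mult nonneg[OF um(1)])
  also have "\<dots> \<le> (\<Sum>u'\<in>U. \<alpha> um u' * M)"
    by (rule sum_mono) (auto intro: mult_left_mono le nonneg[OF um(1)])
  also have "\<dots> = p um * M" by (simp add: degree_fun_def sum_distrib_right)
  finally have "norm c * (p um * M) \<le> 1 * (p um * M)" by (simp add: mult.assoc)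
  moreover have "p um * M > 0" using p_pos[OF um(1)] Mpos by simp
  ultimately show ?thesis by (rule mult_right_le_imp_le) 
qed

lemma eig_real:
  assumes ev: "\<forall>u\<in>U. (\<Sum>u'\<in>U. complex_of_real (\<alpha> u u') * z u') = c * complex_of_real (p u) * z u"
    and u0: "u0 \<in> U" "z u0 \<noteq> 0"
  shows "Im c = 0"
proof -
  define E where "E = (\<Sum>u\<in>U. cnj (z u) * (\<Sum>u'\<in>U. complex_of_real (\<alpha> u u') * z u'))"
  define N where "N = (\<Sum>u\<in>U. p u * (norm (z u))\<^sup>2)"
  have "E = (\<Sum>u\<in>U. c * complex_of_real (p u * (norm (z u))\<^sup>2))"
    unfolding E_def
  proof (rule sum.cong)
    fix u assume u: "u \<in> U"
    have "cnj (z u) * (\<Sum>u'\<in>U. complex_of_real (\<alpha> u u') * z u') = cnj (z u) * (c * complex_of_real (p u) * z u)"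
      using ev u by simp
    also have "\<dots> = c * complex_of_real (p u) * (z u * cnj (z u))" by (simp add: algebra_simps)
    also have "\<dots> = c * complex_of_real (p u) * complex_of_real ((norm (z u))\<^sup>2)" by (metis complex_norm_square)
    also have "\<dots> = c * complex_of_real (p u * (norm (z u))\<^sup>2)" by simp
    finally show "cnj (z u) * (\<Sum>u'\<in>U. complex_of_real (\<alpha> u u') * z u') = c * complex_of_real (p u * (norm (z u))\<^sup>2)" .
  qed simp
  also have "\<dots> = c * complex_of_real N" by (simp add: N_def sum_distrib_left)
  finally have EN: "E = c * complex_of_real N" .
  have "cnj E = (\<Sum>u\<in>U. \<Sum>u'\<in>U. complex_of_real (\<alpha> u u') * (z u * cnj (z u')))"
    unfolding E_def by (simp add: sum_distrib_left algebra_simps)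
  also have "\<dots> = (\<Sum>u'\<in>U. \<Sum>u\<in>U. complex_of_real (\<alpha> u u') * (z u * cnj (z u')))" by (rule sum.swap)
  also have "\<dots> = E" unfolding E_def
    by (auto intro!: sum.cong simp: sum_distrib_left algebra_simps sym)
  finally have "cnj E = E" .
  then have "Im E = 0" by (metis cnj.sel(2) neg_equal_zero)
  moreover have "N > 0"
  proof -
    have "N \<ge> p u0 * (norm (z u0))\<^sup>2" unfolding N_def
      by (rule member_le_sum) (auto intro: fin u0 simp: less_imp_le[OF p_pos])
    moreover have "p u0 * (norm (z u0))\<^sup>2 > 0" using p_pos[OF u0(1)] u0(2) by simp
    ultimately show ?thesis by linarith
  qed
  ultimately show ?thesis using EN by simp
qed

lemma real_eigvec:
  assumes ev: "\<forall>u\<in>U. (\<Sum>u'\<in>U. complex_of_real (\<alpha> u u') * z u') = c * complex_of_real (p u) * z u"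
    and u0: "u0 \<in> U" "z u0 \<noteq> 0"
  shows "\<exists>x. (\<exists>u\<in>U. x u \<noteq> 0) \<and> (\<forall>u\<in>U. (\<Sum>u'\<in>U. \<alpha> u u' * x u') = Re c * p u * x u)"
proof -
  have c: "c = complex_of_real (Re c)" using eig_real[OF assms] by (simp add: complex_eq_iff)
  have ev': "\<forall>u\<in>U. (\<Sum>u'\<in>U. complex_of_real (\<alpha> u u') * z u') = complex_of_real (Re c) * complex_of_real (p u) * z u"
    using ev c by metis
  note R = ev_Re[OF ev']
  show ?thesis
  proof (cases "Re (z u0) = 0")
    case True
    then have "Im (z u0) \<noteq> 0" using u0(2) by (simp add: complex_eq_iff)
    then show ?thesis using R(2) u0(1) by (intro exI[of _ "\<lambda>v. Im (z v)"]) blast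
  next
    case False
    then show ?thesis using R(1) u0(1) by (intro exI[of _ "\<lambda>v. Re (z v)"]) blast
  qed
qed

lemma defl:
  fixes k :: real
  assumes ev: "\<forall>u\<in>U. (\<Sum>u'\<in>U. complex_of_real (\<alpha> u u' / p u + k * p u') * z u') = mu * z u"
    and ne: "mu \<noteq> complex_of_real (1 + k)"
  shows "(\<forall>u\<in>U. (\<Sum>u'\<in>U. complex_of_real (\<alpha> u u') * z u') = mu * complex_of_real (p u) * z u)
      \<and> (\<Sum>u\<in>U. complex_of_real (p u) * z u) = 0"
proof -
  define s where "s = (\<Sum>u\<in>U. complex_of_real (p u) * z u)"
  have split: "(\<Sum>u'\<in>U. complex_of_real (\<alpha> u u' / p u + k * p u') * z u')
      = (\<Sum>u'\<in>U. complex_of_real (\<alpha> u u') * z u') / complex_of_real (p u) + complex_of_real k * s" for u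
    unfolding s_def by (simp add: sum.distrib sum_divide_distrib sum_distrib_left algebra_simps)
  have "(\<Sum>u\<in>U. complex_of_real (p u) * (mu * z u)) = mu * s"
    unfolding s_def by (simp add: sum_distrib_left algebra_simps)
  moreover have "(\<Sum>u\<in>U. complex_of_real (p u) * (mu * z u))
      = (\<Sum>u\<in>U. (\<Sum>u'\<in>U. complex_of_real (\<alpha> u u') * z u') + complex_of_real (p u) * complex_of_real k * s)"
  proof (rule sum.cong)
    fix u assume u: "u \<in> U"
    have "complex_of_real (p u) \<noteq> 0" using p_pos[OF u] by simp
    have "(\<Sum>u'\<in>U. complex_of_real (\<alpha> u u') * z u') / complex_of_real (p u) + complex_of_real k * s = mu * z u"
      using ev u split[of u] by simp
    then have "complex_of_real (p u) * (mu * z u) = complex_of_real (p u) * ((\<Sum>u'\<in>U. complex_of_real (\<alpha> u u') * z u') / complex_of_real (p u) + complex_of_real k * s)"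
      by simp
    also have "\<dots> = (\<Sum>u'\<in>U. complex_of_real (\<alpha> u u') * z u') + complex_of_real (p u) * complex_of_real k * s"
      using \<open>complex_of_real (p u) \<noteq> 0\<close> by (simp add: distrib_left mult.assoc)
    finally show "complex_of_real (p u) * (mu * z u) = (\<Sum>u'\<in>U. complex_of_real (\<alpha> u u') * z u') + complex_of_real (p u) * complex_of_real k * s" .
  qed simp
  moreover have "\<dots> = s + complex_of_real k * s"
    using swap_sum_c[of z] sum_p by (simp add: sum.distrib s_def sum_distrib_right[symmetric] flip: of_real_sum)
  ultimately have "(mu - complex_of_real (1 + k)) * s = 0" by (simp add: algebra_simps)
  then have s0: "s = 0" using ne by simp
  show ?thesis
  proof (intro conjI ballI)
    fix u assume u: "u \<in> U"
    have "complex_of_real (p u) \<noteq> 0" using p_pos[OF u] by simp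
    moreover have "(\<Sum>u'\<in>U. complex_of_real (\<alpha> u u') * z u') / complex_of_real (p u) = mu * z u"
      using ev u split[of u] s0 by simp
    ultimately show "(\<Sum>u'\<in>U. complex_of_real (\<alpha> u u') * z u') = mu * complex_of_real (p u) * z u"
      by (simp add: divide_eq_eq mult.commute mult.left_commute)
  qed (use s0 s_def in simp)
qed

end

lemma sum_bij: fixes n :: nat assumes "bij_betw e {..<n} S" shows "(\<Sum>j\<in>{0..<n}. g (e j)) = (\<Sum>u\<in>S. g u)"
proof -
  have "bij_betw e {0..<n} S" using assms by (simp add: lessThan_atLeast0)
  then show ?thesis by (rule sum.reindex_bij_betw)
qed

lemma eig_transfer:
  fixes F :: "'a \<Rightarrow> 'a \<Rightarrow> complex"
  assumes e: "bij_betw e {..<n} S"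
  shows "eigenvalue (mat n n (\<lambda>(i,j). F (e i) (e j))) c \<longleftrightarrow>
    (\<exists>z. (\<exists>u\<in>S. z u \<noteq> 0) \<and> (\<forall>u\<in>S. (\<Sum>u'\<in>S. F u u' * z u') = c * z u))"
  (is "eigenvalue ?A c \<longleftrightarrow> _")
proof
  assume "eigenvalue ?A c"
  then obtain v where v: "v \<in> carrier_vec n" "v \<noteq> 0\<^sub>v n" "?A *\<^sub>v v = c \<cdot>\<^sub>v v"
    unfolding eigenvalue_def eigenvector_def by auto
  define z where "z = (\<lambda>u. v $ (inv_into {..<n} e u))"
  have ze: "z (e j) = v $ j" if "j < n" for j
    unfolding z_def using e that by (simp add: bij_betw_def inv_into_f_f)
  have row: "(\<Sum>j\<in>{0..<n}. F (e i) (e j) * v $ j) = c * v $ i" if i: "i < n" for i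
  proof -
    have "(?A *\<^sub>v v) $ i = c * v $ i" using v(3) v(1) i by simp
    then show ?thesis using i v(1) by (simp add: scalar_prod_def)
  qed
  show "\<exists>z. (\<exists>u\<in>S. z u \<noteq> 0) \<and> (\<forall>u\<in>S. (\<Sum>u'\<in>S. F u u' * z u') = c * z u)"
  proof (intro exI[of _ z] conjI ballI)
    obtain i where i: "i < n" "v $ i \<noteq> 0" using v(1,2) by (metis carrier_vecD index_zero_vec(1) eq_vecI index_zero_vec(2))
    then show "\<exists>u\<in>S. z u \<noteq> 0" using ze[OF i(1)] e by (auto simp: bij_betw_def intro!: bexI[of _ "e i"])
  next
    fix u assume u: "u \<in> S"
    define i where "i = inv_into {..<n} e u"
    have i: "i < n" "e i = u" unfolding i_def using e u
      by (auto simp: bij_betw_def intro: inv_into_into f_inv_into_f)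
    have "(\<Sum>u'\<in>S. F u u' * z u') = (\<Sum>j\<in>{0..<n}. F u (e j) * z (e j))"
      using sum_bij[OF e, of "\<lambda>u'. F u u' * z u'"] by simp
    also have "\<dots> = (\<Sum>j\<in>{0..<n}. F (e i) (e j) * v $ j)" using ze i by (auto intro!: sum.cong)
    also have "\<dots> = c * z u" using row[OF i(1)] ze[OF i(1)] i by simp
    finally show "(\<Sum>u'\<in>S. F u u' * z u') = c * z u" .
  qed
next
  assume "\<exists>z. (\<exists>u\<in>S. z u \<noteq> 0) \<and> (\<forall>u\<in>S. (\<Sum>u'\<in>S. F u u' * z u') = c * z u)"
  then obtain z u0 where z: "u0 \<in> S" "z u0 \<noteq> 0" "\<forall>u\<in>S. (\<Sum>u'\<in>S. F u u' * z u') = c * z u" by blast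
  define v where "v = vec n (\<lambda>i. z (e i))"
  show "eigenvalue ?A c" unfolding eigenvalue_def eigenvector_def
  proof (intro exI[of _ v] conjI)
    show "v \<in> carrier_vec (dim_row ?A)" by (simp add: v_def)
    define i where "i = inv_into {..<n} e u0"
    have i: "i < n" "e i = u0" unfolding i_def using e z(1)
      by (auto simp: bij_betw_def intro: inv_into_into f_inv_into_f)
    show "v \<noteq> 0\<^sub>v (dim_row ?A)"
    proof
      assume "v = 0\<^sub>v (dim_row ?A)"
      then have "v $ i = 0" using i by simp
      then show False using i z(2) by (simp add: v_def)
    qed
    show "?A *\<^sub>v v = c \<cdot>\<^sub>v v"
    proof (rule eq_vecI)
      fix i assume "i < dim_vec (c \<cdot>\<^sub>v v)"
      then have i: "i < n" by (simp add: v_def)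
      have eS: "e i \<in> S" using e i by (auto simp: bij_betw_def)
      have "(?A *\<^sub>v v) $ i = (\<Sum>j\<in>{0..<n}. F (e i) (e j) * z (e j))"
        using i by (simp add: scalar_prod_def v_def)
      also have "\<dots> = (\<Sum>u'\<in>S. F (e i) u' * z u')" by (rule sum_bij[OF e])
      also have "\<dots> = c * z (e i)" using z(3) eS by simp
      finally show "(?A *\<^sub>v v) $ i = (c \<cdot>\<^sub>v v) $ i" using i by (simp add: v_def)
    qed (simp add: v_def)
  qed
qed

lemma mult_transfer:
  assumes e: "bij_betw e {..<b} S"
  shows "mat a b (\<lambda>(i,k). F i (e k)) * mat b c (\<lambda>(k,j). G (e k) j)
       = mat a c (\<lambda>(i,j). \<Sum>u\<in>S. F i u * G u j)"
proof (rule eq_matI)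
  fix i j assume "i < dim_row (mat a c (\<lambda>(i,j). \<Sum>u\<in>S. F i u * G u j))" "j < dim_col (mat a c (\<lambda>(i,j). \<Sum>u\<in>S. F i u * G u j))"
  then have ij: "i < a" "j < c" by auto
  have "(mat a b (\<lambda>(i,k). F i (e k)) * mat b c (\<lambda>(k,j). G (e k) j)) $$ (i,j) = (\<Sum>k\<in>{0..<b}. F i (e k) * G (e k) j)"
    using ij by (simp add: scalar_prod_def)
  also have "\<dots> = (\<Sum>u\<in>S. F i u * G u j)" by (rule sum_bij[OF e])
  finally show "(mat a b (\<lambda>(i,k). F i (e k)) * mat b c (\<lambda>(k,j). G (e k) j)) $$ (i,j) = mat a c (\<lambda>(i,j). \<Sum>u\<in>S. F i u * G u j) $$ (i,j)"
    using ij by simp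
qed auto

lemma vertex_enum_bij: assumes "finite U" shows "bij_betw (vertex_enum U) {..<card U} U"
  unfolding vertex_enum_def
proof (rule someI_ex[of "\<lambda>e. bij_betw e {..<card U} U"])
  from assms obtain h where "bij_betw h {0..<card U} U" using ex_bij_betw_nat_finite by blast
  then show "\<exists>h. bij_betw h {..<card U} U" unfolding atLeast0LessThan by blast
qed

context cg
begin

lemma eig_tm: "eigenvalue (map_mat complex_of_real (transition_matrix U \<alpha>)) c \<longleftrightarrow>
   (\<exists>z. (\<exists>u\<in>U. z u \<noteq> 0) \<and> (\<forall>u\<in>U. (\<Sum>u'\<in>U. complex_of_real (\<alpha> u u') * z u') = c * complex_of_real (p u) * z u))"
proof -
  let ?e = "vertex_enum U"
  have e: "bij_betw ?e {..<card U} U" using vertex_enum_bij[OF fin] .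
  have M: "map_mat complex_of_real (transition_matrix U \<alpha>)
     = mat (card U) (card U) (\<lambda>(i,j). (\<lambda>u u'. complex_of_real (\<alpha> u u' / p u)) (?e i) (?e j))"
    by (rule eq_matI) (auto simp: transition_matrix_def)
  have eq: "(\<Sum>u'\<in>U. complex_of_real (\<alpha> u u' / p u) * z u') = c * z u \<longleftrightarrow>
      (\<Sum>u'\<in>U. complex_of_real (\<alpha> u u') * z u') = c * complex_of_real (p u) * z u" if u: "u \<in> U" for u z
  proof -
    have pn: "complex_of_real (p u) \<noteq> 0" using p_pos[OF u] by simp
    have "(\<Sum>u'\<in>U. complex_of_real (\<alpha> u u' / p u) * z u') = (\<Sum>u'\<in>U. complex_of_real (\<alpha> u u') * z u') / complex_of_real (p u)"
      by (simp add: sum_divide_distrib)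
    then show ?thesis using pn by (simp add: divide_eq_eq mult.commute mult.left_commute mult.assoc)
  qed
  have aux: "(\<forall>u\<in>U. (\<Sum>u'\<in>U. complex_of_real (\<alpha> u u' / p u) * z u') = c * z u) \<longleftrightarrow>
      (\<forall>u\<in>U. (\<Sum>u'\<in>U. complex_of_real (\<alpha> u u') * z u') = c * complex_of_real (p u) * z u)" for z
    using eq by blast
  have T: "eigenvalue (map_mat complex_of_real (transition_matrix U \<alpha>)) c \<longleftrightarrow>
     (\<exists>z. (\<exists>u\<in>U. z u \<noteq> 0) \<and> (\<forall>u\<in>U. (\<Sum>u'\<in>U. complex_of_real (\<alpha> u u' / p u) * z u') = c * z u))"
    unfolding M by (rule eig_transfer[OF e])
  then show ?thesis by (simp only: aux)
qed

end

lemma sum_prod_split: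
  assumes "finite A" "finite B"
  shows "(\<Sum>z\<in>A \<times> B. f z) = (\<Sum>x\<in>A. \<Sum>y\<in>B. f (x, y))"
  by (simp add: sum.cartesian_product)


lemma abs_prod_le: fixes a b A B :: real shows "\<bar>a\<bar> \<le> A \<Longrightarrow> \<bar>b\<bar> \<le> B \<Longrightarrow> \<bar>a * b\<bar> \<le> A * B"
  by (simp add: abs_mult mult_mono')

lemma small_pert: fixes K t :: real shows "0 \<le> K \<Longrightarrow> \<bar>t\<bar> \<le> K \<Longrightarrow> 0 \<le> 1 + 1 / (K + 1) * t"
proof -
  assume K: "0 \<le> K" and t: "\<bar>t\<bar> \<le> K"
  have pos: "K + 1 > 0" using K by linarith
  have "- (K + 1) \<le> t" using t by linarith
  then have "-1 \<le> t / (K + 1)" using pos by (simp add: le_divide_eq)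
  then show ?thesis by simp
qed

context cg
begin
lemma lin_sum:
  assumes ev: "\<forall>u\<in>U. (\<Sum>u'\<in>U. \<alpha> u u' * x u') = lam * p u * x u" and u: "u \<in> U"
  shows "(\<Sum>u'\<in>U. \<alpha> u u' * (a + b * x u')) = a * p u + b * (lam * p u * x u)"
proof -
  have "(\<Sum>u'\<in>U. \<alpha> u u' * (a + b * x u')) = a * (\<Sum>u'\<in>U. \<alpha> u u') + b * (\<Sum>u'\<in>U. \<alpha> u u' * x u')"
    by (simp add: algebra_simps sum.distrib sum_distrib_left)
  then show ?thesis using ev u by (simp add: degree_fun_def)
qed

lemma abs_le_sum: fixes x :: "'a \<Rightarrow> real" assumes "u \<in> U" shows "\<bar>x u\<bar> \<le> (\<Sum>v\<in>U. \<bar>x v\<bar>)"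
  using member_le_sum[of u U "\<lambda>v. \<bar>x v\<bar>"] assms fin by auto
end

locale cg2 = G: cg U \<alpha> + H: cg V \<beta>
  for U :: "'a set" and \<alpha> and V :: "'b set" and \<beta>
begin

abbreviation "q \<equiv> degree_fun V \<beta>"

lemma construct:
  fixes \<phi> :: "'a \<Rightarrow> 'b \<Rightarrow> 'a \<Rightarrow> 'b \<Rightarrow> real" and \<psi> :: "'a \<Rightarrow> 'b \<Rightarrow> real" and \<epsilon> :: real
  assumes S: "\<And>u u' v v'. u \<in> U \<Longrightarrow> u' \<in> U \<Longrightarrow> v \<in> V \<Longrightarrow> v' \<in> V \<Longrightarrow>
      \<alpha> u u' * \<beta> v v' * \<phi> u v u' v' = \<alpha> u u' * \<beta> v v' * \<phi> u' v' u v"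
    and A: "\<And>u u' v. u \<in> U \<Longrightarrow> u' \<in> U \<Longrightarrow> v \<in> V \<Longrightarrow>
      \<alpha> u u' * (\<Sum>v'\<in>V. \<beta> v v' * \<phi> u v u' v') = \<alpha> u u' * (q v * \<psi> u v)"
    and B: "\<And>u v v'. u \<in> U \<Longrightarrow> v \<in> V \<Longrightarrow> v' \<in> V \<Longrightarrow>
      \<beta> v v' * (\<Sum>u'\<in>U. \<alpha> u u' * \<phi> u v u' v') = \<beta> v v' * (G.p u * \<psi> u v)"
    and N: "\<And>u u' v v'. u \<in> U \<Longrightarrow> u' \<in> U \<Longrightarrow> v \<in> V \<Longrightarrow> v' \<in> V \<Longrightarrow> 0 \<le> 1 + \<epsilon> * \<phi> u v u' v'"
    and M1: "\<And>u. u \<in> U \<Longrightarrow> (\<Sum>v\<in>V. q v * \<psi> u v) = 0"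
    and M2: "\<And>v. v \<in> V \<Longrightarrow> (\<Sum>u\<in>U. G.p u * \<psi> u v) = 0"
    and Z: "ua \<in> U" "vb \<in> V" "\<epsilon> * \<psi> ua vb \<noteq> 0"
  shows "\<not> weakly_disjoint U \<alpha> V \<beta>"
proof -
  define \<gamma> where "\<gamma> = (\<lambda>x y. \<alpha> (fst x) (fst y) * \<beta> (snd x) (snd y) * (1 + \<epsilon> * \<phi> (fst x) (snd x) (fst y) (snd y)))"
  have fU: "finite U" and fV: "finite V" using G.fin H.fin .
  have in1: "(\<Sum>w\<in>V. \<gamma> (u,v) (u',w)) = \<alpha> u u' * (q v * (1 + \<epsilon> * \<psi> u v))"
    if "u \<in> U" "u' \<in> U" "v \<in> V" for u u' v
  proof -
    have "(\<Sum>w\<in>V. \<gamma> (u,v) (u',w)) = \<alpha> u u' * (\<Sum>w\<in>V. \<beta> v w) + \<epsilon> * (\<alpha> u u' * (\<Sum>w\<in>V. \<beta> v w * \<phi> u v u' w))"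
      unfolding \<gamma>_def by (simp add: algebra_simps sum.distrib sum_distrib_left)
    also have "\<dots> = \<alpha> u u' * (q v * (1 + \<epsilon> * \<psi> u v))"
      using A[OF that] by (simp add: degree_fun_def algebra_simps)
    finally show ?thesis .
  qed
  have in2: "(\<Sum>w\<in>U. \<gamma> (u,v) (w,v')) = \<beta> v v' * (G.p u * (1 + \<epsilon> * \<psi> u v))"
    if "u \<in> U" "v \<in> V" "v' \<in> V" for u v v'
  proof -
    have "(\<Sum>w\<in>U. \<gamma> (u,v) (w,v')) = \<beta> v v' * (\<Sum>w\<in>U. \<alpha> u w) + \<epsilon> * (\<beta> v v' * (\<Sum>w\<in>U. \<alpha> u w * \<phi> u v w v'))"
      unfolding \<gamma>_def by (simp add: algebra_simps sum.distrib sum_distrib_left)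
    also have "\<dots> = \<beta> v v' * (G.p u * (1 + \<epsilon> * \<psi> u v))"
      using B[OF that] by (simp add: degree_fun_def algebra_simps)
    finally show ?thesis .
  qed
  have deg: "degree_fun (U \<times> V) \<gamma> (u,v) = G.p u * q v * (1 + \<epsilon> * \<psi> u v)"
    if "u \<in> U" "v \<in> V" for u v
  proof -
    have "degree_fun (U \<times> V) \<gamma> (u,v) = (\<Sum>u'\<in>U. \<Sum>w\<in>V. \<gamma> (u,v) (u',w))"
      unfolding degree_fun_def by (rule sum_prod_split[OF fU fV])
    also have "\<dots> = (\<Sum>u'\<in>U. \<alpha> u u' * (q v * (1 + \<epsilon> * \<psi> u v)))"
      using in1 that by (auto intro!: sum.cong)
    also have "\<dots> = G.p u * q v * (1 + \<epsilon> * \<psi> u v)"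
      by (simp add: degree_fun_def sum_distrib_right mult.assoc)
    finally show ?thesis .
  qed
  have mar1: "(\<Sum>v\<in>V. degree_fun (U \<times> V) \<gamma> (u,v)) = G.p u" if u: "u \<in> U" for u
  proof -
    have "(\<Sum>v\<in>V. degree_fun (U \<times> V) \<gamma> (u,v)) = (\<Sum>v\<in>V. G.p u * (q v + \<epsilon> * (q v * \<psi> u v)))"
      using deg u by (auto intro!: sum.cong simp: algebra_simps)
    also have "\<dots> = G.p u * ((\<Sum>v\<in>V. q v) + \<epsilon> * (\<Sum>v\<in>V. q v * \<psi> u v))"
      by (simp add: distrib_left sum.distrib sum_distrib_left)
    also have "\<dots> = G.p u" using M1[OF u] H.sum_p by simp
    finally show ?thesis .
  qed
  have mar2: "(\<Sum>u\<in>U. degree_fun (U \<times> V) \<gamma> (u,v)) = q v" if v: "v \<in> V" for v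
  proof -
    have "(\<Sum>u\<in>U. degree_fun (U \<times> V) \<gamma> (u,v)) = (\<Sum>u\<in>U. q v * (G.p u + \<epsilon> * (G.p u * \<psi> u v)))"
      using deg v by (auto intro!: sum.cong simp: algebra_simps)
    also have "\<dots> = q v * ((\<Sum>u\<in>U. G.p u) + \<epsilon> * (\<Sum>u\<in>U. G.p u * \<psi> u v))"
      by (simp add: distrib_left sum.distrib sum_distrib_left)
    also have "\<dots> = q v" using M2[OF v] G.sum_p by simp
    finally show ?thesis .
  qed
  have wf: "weight_function (U \<times> V) \<gamma>"
    unfolding weight_function_def
  proof (intro conjI ballI)
    fix x y assume x: "x \<in> U \<times> V" and y: "y \<in> U \<times> V"
    show "0 \<le> \<gamma> x y" unfolding \<gamma>_def
      using x y G.nonneg H.nonneg N by (auto intro!: mult_nonneg_nonneg)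
    have s: "\<alpha> (fst x) (fst y) * \<beta> (snd x) (snd y) * \<phi> (fst x) (snd x) (fst y) (snd y)
        = \<alpha> (fst y) (fst x) * \<beta> (snd y) (snd x) * \<phi> (fst y) (snd y) (fst x) (snd x)"
      using S[of "fst x" "fst y" "snd x" "snd y"] x y G.sym H.sym by auto
    show "\<gamma> x y = \<gamma> y x" unfolding \<gamma>_def
      using s x y G.sym[of "fst x" "fst y"] H.sym[of "snd x" "snd y"] by (auto simp: algebra_simps)
  next
    have "(\<Sum>x\<in>U \<times> V. \<Sum>y\<in>U \<times> V. \<gamma> x y) = (\<Sum>x\<in>U \<times> V. degree_fun (U \<times> V) \<gamma> x)"
      by (simp add: degree_fun_def)
    also have "\<dots> = (\<Sum>u\<in>U. \<Sum>v\<in>V. degree_fun (U \<times> V) \<gamma> (u,v))" by (rule sum_prod_split[OF fU fV])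
    also have "\<dots> = (\<Sum>u\<in>U. G.p u)" using mar1 by simp
    also have "\<dots> = 1" by (rule G.sum_p)
    finally show "(\<Sum>x\<in>U \<times> V. \<Sum>y\<in>U \<times> V. \<gamma> x y) = 1" .
  qed
  have wj: "weight_joining U \<alpha> V \<beta> \<gamma>"
    unfolding weight_joining_def
  proof (intro conjI ballI wf mar1 mar2)
    fix u u' v v' assume u: "u \<in> U" and u': "u' \<in> U" and v: "v \<in> V" and v': "v' \<in> V"
    show "G.p u * (\<Sum>w\<in>V. \<gamma> (u, v) (u', w)) = \<alpha> u u' * degree_fun (U \<times> V) \<gamma> (u, v)"
      using in1[OF u u' v] deg[OF u v] by (simp add: algebra_simps)
    show "q v * (\<Sum>w\<in>U. \<gamma> (u, v) (w, v')) = \<beta> v v' * degree_fun (U \<times> V) \<gamma> (u, v)"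
      using in2[OF u v v'] deg[OF u v] by (simp add: algebra_simps)
  qed
  have "degree_fun (U \<times> V) \<gamma> (ua,vb) \<noteq> G.p ua * q vb"
  proof
    assume "degree_fun (U \<times> V) \<gamma> (ua,vb) = G.p ua * q vb"
    then have "G.p ua * q vb * (\<epsilon> * \<psi> ua vb) = 0" using deg[OF Z(1,2)] by (simp add: algebra_simps)
    then show False using G.p_pos[OF Z(1)] H.p_pos[OF Z(2)] Z(3) by simp
  qed
  then show ?thesis unfolding weakly_disjoint_def graph_joinings_def using wj Z by blast
qed


lemma shared_not_wd:
  assumes zU: "u1 \<in> U" "z u1 \<noteq> 0" "\<forall>u\<in>U. (\<Sum>u'\<in>U. complex_of_real (\<alpha> u u') * z u') = c * complex_of_real (G.p u) * z u"
    and wV: "v1 \<in> V" "w v1 \<noteq> 0" "\<forall>v\<in>V. (\<Sum>v'\<in>V. complex_of_real (\<beta> v v') * w v') = c * complex_of_real (q v) * w v"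
    and c1: "c \<noteq> 1"
  shows "\<not> weakly_disjoint U \<alpha> V \<beta>"
proof -
  define lam where "lam = Re c"
  obtain x where x0: "\<exists>u\<in>U. x u \<noteq> 0" and x: "\<forall>u\<in>U. (\<Sum>u'\<in>U. \<alpha> u u' * x u') = lam * G.p u * x u"
    using G.real_eigvec[OF zU(3) zU(1,2)] unfolding lam_def by blast
  obtain y where y0: "\<exists>v\<in>V. y v \<noteq> 0" and y: "\<forall>v\<in>V. (\<Sum>v'\<in>V. \<beta> v v' * y v') = lam * q v * y v"
    using H.real_eigvec[OF wV(3) wV(1,2)] unfolding lam_def by blast
  obtain u0 where u0: "u0 \<in> U" "x u0 \<noteq> 0" using x0 by blast
  obtain v0 where v0: "v0 \<in> V" "y v0 \<noteq> 0" using y0 by blast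
  have imc: "Im c = 0" using G.eig_real[OF zU(3) zU(1,2)] .
  have l1: "lam \<noteq> 1" using c1 imc unfolding lam_def by (auto simp: complex_eq_iff)
  have labs: "\<bar>lam\<bar> \<le> 1" using G.eig_bound[OF zU(3) zU(1,2)] abs_Re_le_cmod[of c] unfolding lam_def by linarith
  have sx: "(\<Sum>u\<in>U. G.p u * x u) = 0" by (rule G.sum_px_zero[OF x l1])
  have sy: "(\<Sum>v\<in>V. q v * y v) = 0" by (rule H.sum_px_zero[OF y l1])
  define Sx where "Sx = (\<Sum>u\<in>U. \<bar>x u\<bar>)"
  define Sy where "Sy = (\<Sum>v\<in>V. \<bar>y v\<bar>)"
  have bx: "u \<in> U \<Longrightarrow> \<bar>x u\<bar> \<le> Sx" for u unfolding Sx_def by (rule G.abs_le_sum)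
  have by': "v \<in> V \<Longrightarrow> \<bar>y v\<bar> \<le> Sy" for v unfolding Sy_def by (rule H.abs_le_sum)
  have Sx0: "0 \<le> Sx" unfolding Sx_def by (simp add: sum_nonneg)
  have Sy0: "0 \<le> Sy" unfolding Sy_def by (simp add: sum_nonneg)
  have bxy: "u \<in> U \<Longrightarrow> v \<in> V \<Longrightarrow> \<bar>x u * y v\<bar> \<le> Sx * Sy" for u v
    by (rule abs_prod_le[OF bx by'])
  show ?thesis
  proof (cases "lam = -1")
    case True
    have xm: "\<forall>u\<in>U. (\<Sum>u'\<in>U. \<alpha> u u' * x u') = - G.p u * x u" using x True by simp
    have ym: "\<forall>v\<in>V. (\<Sum>v'\<in>V. \<beta> v v' * y v') = - q v * y v" using y True by simp
    show ?thesis
    proof (rule construct[where \<phi> = "\<lambda>u v u' v'. x u * y v" and \<psi> = "\<lambda>u v. x u * y v"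
          and \<epsilon> = "1 / (Sx * Sy + 1)" and ua = u0 and vb = v0])
      fix u u' v v' assume u: "u \<in> U" and u': "u' \<in> U" and v: "v \<in> V" and v': "v' \<in> V"
      show "\<alpha> u u' * \<beta> v v' * (x u * y v) = \<alpha> u u' * \<beta> v v' * (x u' * y v')"
      proof (cases "\<alpha> u u' > 0 \<and> \<beta> v v' > 0")
        case True
        then have "x u' = - x u" "y v' = - y v"
          using G.eigm1_flip[OF xm u u'] H.eigm1_flip[OF ym v v'] by auto
        then show ?thesis by simp
      next
        case False
        then have "\<alpha> u u' = 0 \<or> \<beta> v v' = 0" using G.nonneg[OF u u'] H.nonneg[OF v v'] by auto
        then show ?thesis by auto
      qed
      show "0 \<le> 1 + 1 / (Sx * Sy + 1) * (x u * y v)"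
        by (rule small_pert) (use Sx0 Sy0 bxy[OF u v] in auto)
    next
      fix u u' v assume u: "u \<in> U" and u': "u' \<in> U" and v: "v \<in> V"
      show "\<alpha> u u' * (\<Sum>v'\<in>V. \<beta> v v' * (x u * y v)) = \<alpha> u u' * (q v * (x u * y v))"
        by (simp add: degree_fun_def sum_distrib_right)
    next
      fix u v v' assume u: "u \<in> U" and v: "v \<in> V" and v': "v' \<in> V"
      show "\<beta> v v' * (\<Sum>u'\<in>U. \<alpha> u u' * (x u * y v)) = \<beta> v v' * (G.p u * (x u * y v))"
        by (simp add: degree_fun_def sum_distrib_right)
    next
      fix u assume u: "u \<in> U"
      show "(\<Sum>v\<in>V. q v * (x u * y v)) = 0"
        using sy by (simp add: sum_distrib_left[symmetric] algebra_simps)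
    next
      fix v assume v: "v \<in> V"
      have "(\<Sum>u\<in>U. G.p u * (x u * y v)) = y v * (\<Sum>u\<in>U. G.p u * x u)"
        by (simp add: sum_distrib_left algebra_simps)
      then show "(\<Sum>u\<in>U. G.p u * (x u * y v)) = 0" using sx by simp
    next
      have "Sx * Sy + 1 > 0" using Sx0 Sy0 by (simp add: add_nonneg_pos)
      then show "1 / (Sx * Sy + 1) * (x u0 * y v0) \<noteq> 0" using u0 v0 by simp
    qed (use u0 v0 in auto)
  next
    case False
    have l2: "1 - lam\<^sup>2 \<noteq> 0"
    proof
      assume "1 - lam\<^sup>2 = 0"
      then have "(lam - 1) * (lam + 1) = 0" by (simp add: power2_eq_square algebra_simps)
      then show False using l1 False by simp
    qed
    define K where "K = 4 * (Sx * Sy)"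
    show ?thesis
    proof (rule construct[where \<phi> = "\<lambda>u v u' v'. x u * y v + x u' * y v' - lam * (x u * y v') - lam * (x u' * y v)"
          and \<psi> = "\<lambda>u v. (1 - lam\<^sup>2) * (x u * y v)"
          and \<epsilon> = "1 / (K + 1)" and ua = u0 and vb = v0])
      fix u u' v v' assume u: "u \<in> U" and u': "u' \<in> U" and v: "v \<in> V" and v': "v' \<in> V"
      show "\<alpha> u u' * \<beta> v v' * (x u * y v + x u' * y v' - lam * (x u * y v') - lam * (x u' * y v))
          = \<alpha> u u' * \<beta> v v' * (x u' * y v' + x u * y v - lam * (x u' * y v) - lam * (x u * y v'))"
        by (simp add: algebra_simps)
      have t1: "\<bar>lam * (x u * y v')\<bar> \<le> Sx * Sy"
        using abs_prod_le[OF labs bxy[OF u v']] by simp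
      have t2: "\<bar>lam * (x u' * y v)\<bar> \<le> Sx * Sy"
        using abs_prod_le[OF labs bxy[OF u' v]] by simp
      have "\<bar>x u * y v + x u' * y v' - lam * (x u * y v') - lam * (x u' * y v)\<bar> \<le> K"
        using bxy[OF u v] bxy[OF u' v'] t1 t2 unfolding K_def by linarith
      then show "0 \<le> 1 + 1 / (K + 1) * (x u * y v + x u' * y v' - lam * (x u * y v') - lam * (x u' * y v))"
        by (rule small_pert[rotated]) (use Sx0 Sy0 in \<open>simp add: K_def\<close>)
    next
      fix u u' v assume u: "u \<in> U" and u': "u' \<in> U" and v: "v \<in> V"
      have "(\<Sum>v'\<in>V. \<beta> v v' * (x u * y v + x u' * y v' - lam * (x u * y v') - lam * (x u' * y v)))
          = (\<Sum>v'\<in>V. \<beta> v v' * ((x u * y v - lam * (x u' * y v)) + (x u' - lam * x u) * y v'))"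
        by (simp add: algebra_simps)
      also have "\<dots> = (x u * y v - lam * (x u' * y v)) * q v + (x u' - lam * x u) * (lam * q v * y v)"
        by (rule H.lin_sum[OF y v])
      also have "\<dots> = q v * ((1 - lam\<^sup>2) * (x u * y v))" by (simp add: power2_eq_square algebra_simps)
      finally show "\<alpha> u u' * (\<Sum>v'\<in>V. \<beta> v v' * (x u * y v + x u' * y v' - lam * (x u * y v') - lam * (x u' * y v)))
          = \<alpha> u u' * (q v * ((1 - lam\<^sup>2) * (x u * y v)))" by simp
    next
      fix u v v' assume u: "u \<in> U" and v: "v \<in> V" and v': "v' \<in> V"
      have "(\<Sum>u'\<in>U. \<alpha> u u' * (x u * y v + x u' * y v' - lam * (x u * y v') - lam * (x u' * y v)))
          = (\<Sum>u'\<in>U. \<alpha> u u' * ((x u * y v - lam * (x u * y v')) + (y v' - lam * y v) * x u'))"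
        by (simp add: algebra_simps)
      also have "\<dots> = (x u * y v - lam * (x u * y v')) * G.p u + (y v' - lam * y v) * (lam * G.p u * x u)"
        by (rule G.lin_sum[OF x u])
      also have "\<dots> = G.p u * ((1 - lam\<^sup>2) * (x u * y v))" by (simp add: power2_eq_square algebra_simps)
      finally show "\<beta> v v' * (\<Sum>u'\<in>U. \<alpha> u u' * (x u * y v + x u' * y v' - lam * (x u * y v') - lam * (x u' * y v)))
          = \<beta> v v' * (G.p u * ((1 - lam\<^sup>2) * (x u * y v)))" by simp
    next
      fix u assume u: "u \<in> U"
      have "(\<Sum>v\<in>V. q v * ((1 - lam\<^sup>2) * (x u * y v))) = (\<Sum>v\<in>V. ((1 - lam\<^sup>2) * x u) * (q v * y v))"
        by (rule sum.cong) (simp_all add: mult_ac)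
      also have "\<dots> = (1 - lam\<^sup>2) * x u * (\<Sum>v\<in>V. q v * y v)" by (rule sum_distrib_left[symmetric])
      finally have "(\<Sum>v\<in>V. q v * ((1 - lam\<^sup>2) * (x u * y v))) = (1 - lam\<^sup>2) * x u * (\<Sum>v\<in>V. q v * y v)" .
      then show "(\<Sum>v\<in>V. q v * ((1 - lam\<^sup>2) * (x u * y v))) = 0" using sy by simp
    next
      fix v assume v: "v \<in> V"
      have "(\<Sum>u\<in>U. G.p u * ((1 - lam\<^sup>2) * (x u * y v))) = (\<Sum>u\<in>U. ((1 - lam\<^sup>2) * y v) * (G.p u * x u))"
        by (rule sum.cong) (simp_all add: mult_ac)
      also have "\<dots> = (1 - lam\<^sup>2) * y v * (\<Sum>u\<in>U. G.p u * x u)" by (rule sum_distrib_left[symmetric])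
      finally have "(\<Sum>u\<in>U. G.p u * ((1 - lam\<^sup>2) * (x u * y v))) = (1 - lam\<^sup>2) * y v * (\<Sum>u\<in>U. G.p u * x u)" .
      then show "(\<Sum>u\<in>U. G.p u * ((1 - lam\<^sup>2) * (x u * y v))) = 0" using sx by simp
    next
      have "K + 1 > 0" using Sx0 Sy0 by (simp add: K_def add_nonneg_pos)
      then show "1 / (K + 1) * ((1 - lam\<^sup>2) * (x u0 * y v0)) \<noteq> 0" using u0 v0 l2 by simp
    qed (use u0 v0 in auto)
  qed
qed

end

context cg2
begin

lemma no_shared_disjoint:
  assumes hyp: "\<And>c. (\<exists>z. (\<exists>u\<in>U. z u \<noteq> 0) \<and> (\<forall>u\<in>U. (\<Sum>u'\<in>U. complex_of_real (\<alpha> u u') * z u') = c * complex_of_real (G.p u) * z u))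
     \<Longrightarrow> (\<exists>w. (\<exists>v\<in>V. w v \<noteq> 0) \<and> (\<forall>v\<in>V. (\<Sum>v'\<in>V. complex_of_real (\<beta> v v') * w v') = c * complex_of_real (q v) * w v))
     \<Longrightarrow> c = 1"
  shows "weakly_disjoint U \<alpha> V \<beta>"
  unfolding weakly_disjoint_def graph_joinings_def
proof (intro ballI, unfold mem_Collect_eq)
  fix \<gamma> u v assume wj: "weight_joining U \<alpha> V \<beta> \<gamma>" and u: "u \<in> U" and v: "v \<in> V"
  have fU: "finite U" and fV: "finite V" using G.fin H.fin .
  define r where "r = (\<lambda>u v. degree_fun (U \<times> V) \<gamma> (u,v))"
  have wf: "weight_function (U \<times> V) \<gamma>" using wj by (simp add: weight_joining_def)
  have mar1: "\<And>u. u \<in> U \<Longrightarrow> (\<Sum>v\<in>V. r u v) = G.p u" using wj by (simp add: weight_joining_def r_def)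
  have mar2: "\<And>v. v \<in> V \<Longrightarrow> (\<Sum>u\<in>U. r u v) = q v" using wj by (simp add: weight_joining_def r_def)
  have bc1: "\<And>u u' v. u \<in> U \<Longrightarrow> u' \<in> U \<Longrightarrow> v \<in> V \<Longrightarrow> G.p u * (\<Sum>w\<in>V. \<gamma> (u, v) (u', w)) = \<alpha> u u' * r u v"
    using wj unfolding weight_joining_def r_def by blast
  have bc2: "\<And>u v v'. u \<in> U \<Longrightarrow> v \<in> V \<Longrightarrow> v' \<in> V \<Longrightarrow> q v * (\<Sum>w\<in>U. \<gamma> (u, v) (w, v')) = \<beta> v v' * r u v"
    using wj unfolding weight_joining_def r_def by blast
  have symg: "\<And>x y. x \<in> U \<times> V \<Longrightarrow> y \<in> U \<times> V \<Longrightarrow> \<gamma> x y = \<gamma> y x"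
    using wf unfolding weight_function_def by blast
  have E: "(\<Sum>u\<in>U. \<alpha> u' u * (r u v / G.p u)) = (\<Sum>v'\<in>V. r u' v' * \<beta> v' v / q v')"
    if u': "u' \<in> U" and v: "v \<in> V" for u' v
  proof -
    define X where "X = (\<Sum>u\<in>U. \<Sum>v'\<in>V. \<gamma> (u,v) (u',v'))"
    have "X = (\<Sum>u\<in>U. \<alpha> u' u * (r u v / G.p u))"
      unfolding X_def
    proof (rule sum.cong)
      fix u assume u: "u \<in> U"
      have "G.p u * (\<Sum>v'\<in>V. \<gamma> (u,v) (u',v')) = \<alpha> u u' * r u v" by (rule bc1[OF u u' v])
      then show "(\<Sum>v'\<in>V. \<gamma> (u,v) (u',v')) = \<alpha> u' u * (r u v / G.p u)"
        using G.p_pos[OF u] G.sym[OF u u'] by (simp add: field_simps)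
    qed simp
    moreover have "X = (\<Sum>v'\<in>V. r u' v' * \<beta> v' v / q v')"
    proof -
      have "X = (\<Sum>v'\<in>V. \<Sum>u\<in>U. \<gamma> (u,v) (u',v'))" unfolding X_def by (rule sum.swap)
      also have "\<dots> = (\<Sum>v'\<in>V. \<Sum>u\<in>U. \<gamma> (u',v') (u,v))"
        using symg u' v by (auto intro!: sum.cong)
      also have "\<dots> = (\<Sum>v'\<in>V. r u' v' * \<beta> v' v / q v')"
      proof (rule sum.cong)
        fix v' assume v': "v' \<in> V"
        have "q v' * (\<Sum>u\<in>U. \<gamma> (u',v') (u,v)) = \<beta> v' v * r u' v'" by (rule bc2[OF u' v' v])
        then show "(\<Sum>u\<in>U. \<gamma> (u',v') (u,v)) = r u' v' * \<beta> v' v / q v'"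
          using H.p_pos[OF v'] by (simp add: field_simps)
      qed simp
      finally show ?thesis .
    qed
    ultimately show ?thesis by simp
  qed
  define T where "T = (\<lambda>u v. r u v / G.p u - q v)"
  have sT1: "(\<Sum>v'\<in>V. T u v') = 0" if u: "u \<in> U" for u
  proof -
    have "(\<Sum>v'\<in>V. T u v') = (\<Sum>v'\<in>V. r u v') / G.p u - (\<Sum>v'\<in>V. q v')"
      unfolding T_def by (simp add: sum_subtractf sum_divide_distrib)
    then show ?thesis using mar1[OF u] H.sum_p G.p_pos[OF u] by simp
  qed
  have sT2: "(\<Sum>u'\<in>U. G.p u' * T u' v) = 0" if v: "v \<in> V" for v
  proof -
    have "(\<Sum>u'\<in>U. G.p u' * T u' v) = (\<Sum>u'\<in>U. r u' v - q v * G.p u')"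
      unfolding T_def
    proof (rule sum.cong)
      fix x assume "x \<in> U"
      then have "G.p x > 0" by (rule G.p_pos)
      then show "G.p x * (r x v / G.p x - q v) = r x v - q v * G.p x" by (simp add: field_simps)
    qed simp
    also have "\<dots> = (\<Sum>u'\<in>U. r u' v) - q v * (\<Sum>u'\<in>U. G.p u')"
      by (simp add: sum_subtractf sum_distrib_left)
    finally show ?thesis using mar2[OF v] G.sum_p by simp
  qed
  have key: "(\<Sum>u'\<in>U. (\<alpha> u u' / G.p u + 1 * G.p u') * T u' v) = (\<Sum>v'\<in>V. T u v' * (\<beta> v' v / q v' + 2 * q v))"
    if u: "u \<in> U" and v: "v \<in> V" for u v
  proof -
    have pu: "G.p u > 0" using G.p_pos[OF u] .
    have "(\<Sum>u'\<in>U. (\<alpha> u u' / G.p u + 1 * G.p u') * T u' v)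
        = (\<Sum>u'\<in>U. \<alpha> u u' * (r u' v / G.p u')) / G.p u - q v * (\<Sum>u'\<in>U. \<alpha> u u') / G.p u + (\<Sum>u'\<in>U. G.p u' * T u' v)"
      unfolding T_def
      by (simp add: algebra_simps sum.distrib sum_subtractf sum_divide_distrib sum_distrib_left add_divide_distrib diff_divide_distrib)
    also have "\<dots> = (\<Sum>u'\<in>U. \<alpha> u u' * (r u' v / G.p u')) / G.p u - q v"
      using sT2[OF v] pu by (simp add: degree_fun_def)
    finally have L: "(\<Sum>u'\<in>U. (\<alpha> u u' / G.p u + 1 * G.p u') * T u' v) = (\<Sum>u'\<in>U. \<alpha> u u' * (r u' v / G.p u')) / G.p u - q v" .
    have sb: "(\<Sum>v'\<in>V. q v' * (\<beta> v' v / q v')) = q v"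
    proof -
      have "(\<Sum>v'\<in>V. q v' * (\<beta> v' v / q v')) = (\<Sum>v'\<in>V. \<beta> v v')"
      proof (rule sum.cong)
        fix x assume x: "x \<in> V"
        then have "q x > 0" by (rule H.p_pos)
        then show "q x * (\<beta> x v / q x) = \<beta> v x" using H.sym[OF x v] by simp
      qed simp
      then show ?thesis by (simp add: degree_fun_def)
    qed
    have "(\<Sum>v'\<in>V. T u v' * (\<beta> v' v / q v' + 2 * q v))
        = (\<Sum>v'\<in>V. r u v' * \<beta> v' v / q v') / G.p u - (\<Sum>v'\<in>V. q v' * (\<beta> v' v / q v')) + 2 * q v * (\<Sum>v'\<in>V. T u v')"
      unfolding T_def
      by (simp add: algebra_simps sum.distrib sum_subtractf sum_divide_distrib sum_distrib_left)
    also have "\<dots> = (\<Sum>v'\<in>V. r u v' * \<beta> v' v / q v') / G.p u - q v"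
      using sT1[OF u] sb by simp
    finally have R: "(\<Sum>v'\<in>V. T u v' * (\<beta> v' v / q v' + 2 * q v)) = (\<Sum>v'\<in>V. r u v' * \<beta> v' v / q v') / G.p u - q v" .
    show ?thesis unfolding L R E[OF u v, symmetric] by simp
  qed
  define n where "n = card U"
  define m where "m = card V"
  define e where "e = vertex_enum U"
  define f where "f = vertex_enum V"
  have e: "bij_betw e {..<n} U" unfolding e_def n_def by (rule vertex_enum_bij[OF fU])
  have f: "bij_betw f {..<m} V" unfolding f_def m_def by (rule vertex_enum_bij[OF fV])
  define FA where "FA = (\<lambda>u u'. complex_of_real (\<alpha> u u' / G.p u + 1 * G.p u'))"
  define FB where "FB = (\<lambda>v v'. complex_of_real (\<beta> v v' / q v + 2 * q v'))"
  define A where "A = mat n n (\<lambda>(i,k). FA (e i) (e k))"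
  define B where "B = mat m m (\<lambda>(l,j). FB (f l) (f j))"
  define X where "X = mat n m (\<lambda>(k,j). complex_of_real (T (e k) (f j)))"
  have AX: "A * X = mat n m (\<lambda>(i,j). \<Sum>u'\<in>U. FA (e i) u' * complex_of_real (T u' (f j)))"
    unfolding A_def X_def
    by (rule mult_transfer[OF e, where F = "\<lambda>i u'. FA (e i) u'" and G = "\<lambda>u' j. complex_of_real (T u' (f j))"])
  have XB: "X * B = mat n m (\<lambda>(i,j). \<Sum>v'\<in>V. complex_of_real (T (e i) v') * FB v' (f j))"
    unfolding B_def X_def
    by (rule mult_transfer[OF f, where F = "\<lambda>i v'. complex_of_real (T (e i) v')" and G = "\<lambda>v' j. FB v' (f j)"])
  have AXB: "A * X = X * B" unfolding AX XB
  proof (rule eq_matI)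
    fix i j assume "i < dim_row (mat n m (\<lambda>(i,j). \<Sum>v'\<in>V. complex_of_real (T (e i) v') * FB v' (f j)))"
      "j < dim_col (mat n m (\<lambda>(i,j). \<Sum>v'\<in>V. complex_of_real (T (e i) v') * FB v' (f j)))"
    then have ij: "i < n" "j < m" by auto
    have eU: "e i \<in> U" using e ij by (auto simp: bij_betw_def)
    have fV': "f j \<in> V" using f ij by (auto simp: bij_betw_def)
    have "complex_of_real (\<Sum>u'\<in>U. (\<alpha> (e i) u' / G.p (e i) + 1 * G.p u') * T u' (f j))
        = complex_of_real (\<Sum>v'\<in>V. T (e i) v' * (\<beta> v' (f j) / q v' + 2 * q (f j)))"
      using key[OF eU fV'] by simp
    then show "mat n m (\<lambda>(i,j). \<Sum>u'\<in>U. FA (e i) u' * complex_of_real (T u' (f j))) $$ (i, j)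
        = mat n m (\<lambda>(i,j). \<Sum>v'\<in>V. complex_of_real (T (e i) v') * FB v' (f j)) $$ (i, j)"
      using ij unfolding FA_def FB_def by simp
  qed auto
  have nocommon: False if eA: "eigenvalue A mu" and eB: "eigenvalue B mu" for mu
  proof -
    obtain z u1 where z: "u1 \<in> U" "z u1 \<noteq> 0" "\<forall>u\<in>U. (\<Sum>u'\<in>U. FA u u' * z u') = mu * z u"
      using eA unfolding A_def eig_transfer[OF e] by blast
    obtain w v1 where w: "v1 \<in> V" "w v1 \<noteq> 0" "\<forall>v\<in>V. (\<Sum>v'\<in>V. FB v v' * w v') = mu * w v"
      using eB unfolding B_def eig_transfer[OF f] by blast
    have zA: "\<forall>u\<in>U. (\<Sum>u'\<in>U. complex_of_real (\<alpha> u u' / G.p u + 1 * G.p u') * z u') = mu * z u"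
      using z(3) unfolding FA_def .
    have wB: "\<forall>v\<in>V. (\<Sum>v'\<in>V. complex_of_real (\<beta> v v' / q v + 2 * q v') * w v') = mu * w v"
      using w(3) unfolding FB_def .
    show False
    proof (cases "mu = complex_of_real (1 + 1)")
      case True
      then have "mu \<noteq> complex_of_real (1 + 2)" by simp
      from H.defl[OF wB this] have "\<forall>v\<in>V. (\<Sum>v'\<in>V. complex_of_real (\<beta> v v') * w v') = mu * complex_of_real (q v) * w v" by blast
      from H.eig_bound[OF this w(1,2)] True show False by simp
    next
      case n2: False
      from G.defl[OF zA n2] have zE: "\<forall>u\<in>U. (\<Sum>u'\<in>U. complex_of_real (\<alpha> u u') * z u') = mu * complex_of_real (G.p u) * z u"
        and zs: "(\<Sum>u\<in>U. complex_of_real (G.p u) * z u) = 0" by blast+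
      show False
      proof (cases "mu = complex_of_real (1 + 2)")
        case True
        from G.eig_bound[OF zE z(1,2)] True show False by simp
      next
        case False
        from H.defl[OF wB False] have wE: "\<forall>v\<in>V. (\<Sum>v'\<in>V. complex_of_real (\<beta> v v') * w v') = mu * complex_of_real (q v) * w v" by blast
        have mu1: "mu = 1" using hyp[of mu] zE wE z(1,2) w(1,2) by blast
        have zc: "z u' = z u1" if "u' \<in> U" for u'
          using G.const_complex[of z, OF _ that z(1)] zE mu1 by simp
        have "(\<Sum>u\<in>U. complex_of_real (G.p u) * z u) = (\<Sum>u\<in>U. complex_of_real (G.p u)) * z u1"
          using zc by (simp add: sum_distrib_right)
        also have "\<dots> = z u1" using G.sum_p by (simp flip: of_real_sum)
        finally show False using zs z(2) by simp
      qed
    qed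
  qed
  have X0: "X = 0\<^sub>m n m"
    by (rule sylvester_zero[of A n B m X]) (use AXB nocommon in \<open>auto simp: A_def B_def X_def\<close>)
  define i where "i = inv_into {..<n} e u"
  define j where "j = inv_into {..<m} f v"
  have i: "i < n" "e i = u" unfolding i_def using e u by (auto simp: bij_betw_def intro: inv_into_into f_inv_into_f)
  have j: "j < m" "f j = v" unfolding j_def using f v by (auto simp: bij_betw_def intro: inv_into_into f_inv_into_f)
  have "X $$ (i,j) = 0" using X0 i j by simp
  then have "T u v = 0" using i j by (simp add: X_def)
  then show "degree_fun (U \<times> V) \<gamma> (u, v) = G.p u * q v"
    using G.p_pos[OF u] unfolding T_def r_def by (simp add: field_simps)
qed

end

theorem theorem5p2:
  fixes U :: "'a set" and \<alpha> :: "'a \<Rightarrow> 'a \<Rightarrow> real"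
    and V :: "'b set" and \<beta> :: "'b \<Rightarrow> 'b \<Rightarrow> real"
  assumes "connected_graph U \<alpha>" and "connected_graph V \<beta>"
  shows "weakly_disjoint U \<alpha> V \<beta> \<longleftrightarrow>
    (\<forall>c::complex.
        eigenvalue (map_mat complex_of_real (transition_matrix U \<alpha>)) c \<and>
        eigenvalue (map_mat complex_of_real (transition_matrix V \<beta>)) c \<longrightarrow> c = 1)"
proof -
  interpret cg2 U \<alpha> V \<beta> by unfold_locales (use assms in auto)
  show ?thesis
  proof
    assume wd: "weakly_disjoint U \<alpha> V \<beta>"
    show "\<forall>c::complex.
        eigenvalue (map_mat complex_of_real (transition_matrix U \<alpha>)) c \<and>
        eigenvalue (map_mat complex_of_real (transition_matrix V \<beta>)) c \<longrightarrow> c = 1"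
    proof (intro allI impI, elim conjE)
      fix c :: complex
      assume eU: "eigenvalue (map_mat complex_of_real (transition_matrix U \<alpha>)) c"
        and eV: "eigenvalue (map_mat complex_of_real (transition_matrix V \<beta>)) c"
      obtain z u1 where z: "u1 \<in> U" "z u1 \<noteq> 0" "\<forall>u\<in>U. (\<Sum>u'\<in>U. complex_of_real (\<alpha> u u') * z u') = c * complex_of_real (G.p u) * z u"
        using eU unfolding G.eig_tm by blast
      obtain w v1 where w: "v1 \<in> V" "w v1 \<noteq> 0" "\<forall>v\<in>V. (\<Sum>v'\<in>V. complex_of_real (\<beta> v v') * w v') = c * complex_of_real (q v) * w v"
        using eV unfolding H.eig_tm by blast
      show "c = 1"
      proof (rule ccontr)
        assume "c \<noteq> 1"
        from shared_not_wd[OF z w this] wd show False by simp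
      qed
    qed
  next
    assume h: "\<forall>c::complex.
        eigenvalue (map_mat complex_of_real (transition_matrix U \<alpha>)) c \<and>
        eigenvalue (map_mat complex_of_real (transition_matrix V \<beta>)) c \<longrightarrow> c = 1"
    show "weakly_disjoint U \<alpha> V \<beta>"
    proof (rule no_shared_disjoint)
      fix c
      assume a1: "\<exists>z. (\<exists>u\<in>U. z u \<noteq> 0) \<and> (\<forall>u\<in>U. (\<Sum>u'\<in>U. complex_of_real (\<alpha> u u') * z u') = c * complex_of_real (G.p u) * z u)"
        and a2: "\<exists>w. (\<exists>v\<in>V. w v \<noteq> 0) \<and> (\<forall>v\<in>V. (\<Sum>v'\<in>V. complex_of_real (\<beta> v v') * w v') = c * complex_of_real (q v) * w v)"
      show "c = 1" using h a1 a2 unfolding G.eig_tm H.eig_tm by blast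
    qed
  qed
qed

end
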